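(* Let $R$ be a dp-minimal integral domain with maximal ideal $\mathfrak M$. Then every prime ideal $\mathfrak p\neq\mathfrak M$ of $R$ is strongly prime.
   Context: Rings are commutative with identity; dp-minimal means the theory in the language of rings has dp-rank $1$ (such domains are local). An ideal $\mathfrak p$ of a domain $R$ is strongly prime if for all $x,y\in\mathrm{Frac}(R)$, $xy\in\mathfrak p$ implies $x\in\mathfrak p$ or $y\in\mathfrak p$. *)

theory Defs
  imports "HOL-Computational_Algebra.Polynomial_Factorial"
begin

datatype rterm = RVar nat | RZero | ROne | RAdd rterm rterm | RNeg rterm | RMul rterm rterm

datatype rform = REq rterm rterm | RNot rform | RConj rform rform | REx nat rform

fun teval :: "(nat \<Rightarrow> 'a::comm_ring_1) \<Rightarrow> rterm \<Rightarrow> 'a" where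
  "teval e (RVar n) = e n"
| "teval e RZero = 0"
| "teval e ROne = 1"
| "teval e (RAdd s t) = teval e s + teval e t"
| "teval e (RNeg s) = - teval e s"
| "teval e (RMul s t) = teval e s * teval e t"

fun feval :: "(nat \<Rightarrow> 'a::comm_ring_1) \<Rightarrow> rform \<Rightarrow> bool" where
  "feval e (REq s t) = (teval e s = teval e t)"
| "feval e (RNot f) = (\<not> feval e f)"
| "feval e (RConj f g) = (feval e f \<and> feval e g)"
| "feval e (REx v f) = (\<exists>a. feval (e(v := a)) f)"

text \<open>Formulas phi(x, y) are encoded with the object variable x being variable 0 and the
  parameter variables being all other variables; a parameter tuple is an assignment
  b :: nat => 'a (its value at 0 is irrelevant, since it is overwritten by x).\<close>

definition ict_pattern2 :: "'a::comm_ring_1 itself \<Rightarrow> rform \<Rightarrow> rform \<Rightarrow> nat \<Rightarrow> bool" where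
  "ict_pattern2 _ \<phi> \<psi> n \<longleftrightarrow>
     (\<exists>(b :: nat \<Rightarrow> nat \<Rightarrow> 'a) (c :: nat \<Rightarrow> nat \<Rightarrow> 'a).
        \<forall>i<n. \<forall>j<n. \<exists>a::'a.
          (\<forall>i'<n. feval ((b i')(0 := a)) \<phi> \<longleftrightarrow> i' = i) \<and>
          (\<forall>j'<n. feval ((c j')(0 := a)) \<psi> \<longleftrightarrow> j' = j))"

text \<open>dp-minimality of the complete theory Th(R) in the ring language: dp-rank exactly 1.
  dp-rank at most 1 means no ict-pattern of depth 2 (in a single variable) in the monster
  model; by compactness (and R being elementarily equivalent to the monster model) this is
  the same as: for all phi, psi there is a finite bound n on the width of such patterns in R.
  dp-rank not 0 means R is infinite.\<close>

definition dp_minimal :: "'a::comm_ring_1 itself \<Rightarrow> bool" where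
  "dp_minimal T \<longleftrightarrow> infinite (UNIV :: 'a set) \<and>
     (\<forall>\<phi> \<psi>. \<exists>n. \<not> ict_pattern2 T \<phi> \<psi> n)"

definition is_ideal :: "'a::comm_ring_1 set \<Rightarrow> bool" where
  "is_ideal I \<longleftrightarrow> 0 \<in> I \<and> (\<forall>x\<in>I. \<forall>y\<in>I. x + y \<in> I) \<and> (\<forall>r. \<forall>x\<in>I. r * x \<in> I)"

definition prime_ideal :: "'a::comm_ring_1 set \<Rightarrow> bool" where
  "prime_ideal P \<longleftrightarrow> is_ideal P \<and> P \<noteq> UNIV \<and> (\<forall>x y. x * y \<in> P \<longrightarrow> x \<in> P \<or> y \<in> P)"

definition maximal_ideal :: "'a::comm_ring_1 set \<Rightarrow> bool" where
  "maximal_ideal M \<longleftrightarrow> is_ideal M \<and> M \<noteq> UNIV \<and>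
     (\<forall>J. is_ideal J \<and> M \<subseteq> J \<longrightarrow> J = M \<or> J = UNIV)"

definition strongly_prime :: "'a::idom set \<Rightarrow> bool" where
  "strongly_prime P \<longleftrightarrow>
     (\<forall>x y :: 'a fract. x * y \<in> to_fract ` P \<longrightarrow> x \<in> to_fract ` P \<or> y \<in> to_fract ` P)"

end

theory Submission
  imports Defs
begin

definition cf :: rform where
  "cf = REx 3 (REq (RVar 0) (RAdd (RVar 1) (RMul (RVar 2) (RVar 3))))"

lemma feval_cf: "feval (e(0 := (x::'a::comm_ring_1))) cf \<longleftrightarrow> e 2 dvd (x - e 1)"
proof -
  have "feval (e(0 := x)) cf \<longleftrightarrow> (\<exists>z. x = e 1 + e 2 * z)" by (simp add: cf_def)
  also have "\<dots> \<longleftrightarrow> e 2 dvd (x - e 1)"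
    by (auto simp: dvd_def algebra_simps)
  finally show ?thesis .
qed

lemma grid:
  assumes "dp_minimal TYPE('a::idom)"
  obtains N :: nat where "\<And>(g::'a) h (bs::nat \<Rightarrow> 'a) (cs::nat \<Rightarrow> 'a). (\<forall>i. h dvd bs i) \<Longrightarrow> (\<forall>j. g dvd cs j) \<Longrightarrow>
     (\<forall>i<N. \<forall>i'<N. i \<noteq> i' \<longrightarrow> \<not> g dvd (bs i - bs i')) \<Longrightarrow>
     (\<forall>j<N. \<forall>j'<N. j \<noteq> j' \<longrightarrow> \<not> h dvd (cs j - cs j')) \<Longrightarrow> False"
proof -
  from assms obtain N where nN: "\<not> ict_pattern2 TYPE('a) cf cf N"
    unfolding dp_minimal_def by blast
  have key: "False" if h1: "\<forall>i. h dvd bs i" and h2: "\<forall>j. g dvd cs j"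
     and h3: "\<forall>i<N. \<forall>i'<N. i \<noteq> i' \<longrightarrow> \<not> g dvd (bs i - bs i')"
     and h4: "\<forall>j<N. \<forall>j'<N. j \<noteq> j' \<longrightarrow> \<not> h dvd (cs j - cs j')"
   for g h :: 'a and bs cs
  proof -
    define b where "b = (\<lambda>(i::nat) (k::nat). if k = 1 then bs i else g)"
    define c where "c = (\<lambda>(j::nat) (k::nat). if k = 1 then cs j else h)"
    have "ict_pattern2 TYPE('a) cf cf N"
      unfolding ict_pattern2_def
    proof (rule exI[of _ b], rule exI[of _ c], intro allI impI)
      fix i j assume i: "i < N" and j: "j < N"
      show "\<exists>a. (\<forall>i'<N. feval ((b i')(0 := a)) cf \<longleftrightarrow> i' = i) \<and>
                (\<forall>j'<N. feval ((c j')(0 := a)) cf \<longleftrightarrow> j' = j)"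
      proof (rule exI[of _ "bs i + cs j"], intro conjI allI impI)
        fix i' assume i': "i' < N"
        have "feval ((b i')(0 := bs i + cs j)) cf \<longleftrightarrow> g dvd (bs i + cs j - bs i')"
          by (simp add: feval_cf b_def)
        also have "\<dots> \<longleftrightarrow> g dvd (bs i - bs i')"
        proof -
          have "bs i + cs j - bs i' = (bs i - bs i') + cs j" by (simp add: algebra_simps)
          thus ?thesis using h2 dvd_add_left_iff by metis
        qed
        also have "\<dots> \<longleftrightarrow> i' = i" using h3 i i' by auto
        finally show "feval ((b i')(0 := bs i + cs j)) cf \<longleftrightarrow> i' = i" .
      next
        fix j' assume j': "j' < N"
        have "feval ((c j')(0 := bs i + cs j)) cf \<longleftrightarrow> h dvd (bs i + cs j - cs j')"
          by (simp add: feval_cf c_def)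
        also have "\<dots> \<longleftrightarrow> h dvd (cs j - cs j')"
        proof -
          have "bs i + cs j - cs j' = (cs j - cs j') + bs i" by (simp add: algebra_simps)
          thus ?thesis using h1 dvd_add_left_iff by metis
        qed
        also have "\<dots> \<longleftrightarrow> j' = j" using h4 j j' by auto
        finally show "feval ((c j')(0 := bs i + cs j)) cf \<longleftrightarrow> j' = j" .
      qed
    qed
    with nN show False by blast
  qed
  show ?thesis by (rule that[where N=N]) (erule key; assumption)
qed


lemma ideal_mult: "is_ideal I \<Longrightarrow> x \<in> I \<Longrightarrow> r * x \<in> I"
  unfolding is_ideal_def by blast

lemma ideal_add: "is_ideal I \<Longrightarrow> x \<in> I \<Longrightarrow> y \<in> I \<Longrightarrow> x + y \<in> I"
  unfolding is_ideal_def by blast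

lemma ideal_dvd: "is_ideal I \<Longrightarrow> x \<in> I \<Longrightarrow> x dvd y \<Longrightarrow> y \<in> I"
proof -
  assume a: "is_ideal I" "x \<in> I" "x dvd y"
  then obtain k where "y = k * x" by (auto simp: dvd_def mult.commute)
  thus "y \<in> I" using ideal_mult[OF a(1,2)] by simp
qed

lemma ideal_unit: "is_ideal I \<Longrightarrow> x \<in> I \<Longrightarrow> x dvd 1 \<Longrightarrow> I = UNIV"
proof -
  assume a: "is_ideal I" "x \<in> I" "x dvd 1"
  have "z \<in> I" for z
  proof -
    have "x dvd z" using a(3) dvd_trans one_dvd by blast
    thus ?thesis using ideal_dvd[OF a(1,2)] by blast
  qed
  thus "I = UNIV" by blast
qed

lemma prime_pow: "prime_ideal P \<Longrightarrow> x \<notin> P \<Longrightarrow> x ^ n \<notin> P"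
proof (induction n)
  case 0
  assume "prime_ideal P" "x \<notin> P"
  thus ?case using ideal_unit[of P 1] by (auto simp: prime_ideal_def)
next
  case (Suc n)
  thus ?case by (auto simp: prime_ideal_def)
qed

lemma pow_trick:
  fixes t q :: "'a::idom"
  assumes "t \<noteq> 0" "i < N" "i' < N" "i \<noteq> i'" "t ^ N dvd q * (t ^ i - t ^ i')"
  shows "t dvd q"
proof -
  have main: "t dvd q" if "i < i'" "i < N" "t ^ N dvd q * (t ^ i - t ^ i')" for i i'
  proof -
    obtain d where d: "i' = i + d" "d > 0" using \<open>i < i'\<close> by (metis less_imp_add_positive)
    obtain e where e: "N = i + e" "e > 0" using \<open>i < N\<close> by (metis less_imp_add_positive)
    have "q * (t ^ i - t ^ i') = t ^ i * (q - q * t ^ d)" by (simp add: d power_add algebra_simps)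
    moreover have "t ^ N = t ^ i * t ^ e" by (simp add: e power_add)
    ultimately have "t ^ e dvd q - q * t ^ d" using that(3) \<open>t \<noteq> 0\<close> by simp
    moreover have "t dvd t ^ e" using e by (simp add: dvd_power)
    ultimately have "t dvd q - q * t ^ d" by (rule dvd_trans[rotated])
    moreover have "t dvd q * t ^ d" using d by (simp add: dvd_power)
    ultimately show ?thesis by (metis diff_add_cancel dvd_add)
  qed
  show ?thesis
  proof (cases "i < i'")
    case True thus ?thesis using main assms by blast
  next
    case False
    hence "i' < i" using assms by simp
    moreover have "t ^ N dvd q * (t ^ i' - t ^ i)"
      using assms(5) by (metis dvd_minus_iff minus_diff_eq mult_minus_right)
    ultimately show ?thesis using main assms by blast
  qed
qed

lemma one_minus_pow: "\<exists>c. (1 - (m::'a::comm_ring_1)) ^ n = 1 - m * c"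
proof (induction n)
  case 0 show ?case by (rule exI[of _ 0]) simp
next
  case (Suc n)
  then obtain c where "(1 - m) ^ n = 1 - m * c" by blast
  hence "(1 - m) ^ Suc n = (1 - m) * (1 - m * c)" by simp
  also have "\<dots> = 1 - m * (1 + c - m * c)" by (simp add: algebra_simps)
  finally have "(1 - m) ^ Suc n = 1 - m * (1 + c - m * c)" .
  thus ?case by blast
qed

lemma dvd_one_minus_pow: "(m::'a::comm_ring_1) dvd (1 - m) ^ n \<Longrightarrow> m dvd 1"
proof -
  assume h: "m dvd (1 - m) ^ n"
  obtain c where "(1 - m) ^ n = 1 - m * c" using one_minus_pow by blast
  with h have "m dvd 1 - m * c" by simp
  thus "m dvd 1" by (metis diff_add_cancel dvd_add dvd_triv_left)
qed

lemma locality: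
  fixes M :: "'a::idom set"
  assumes dp: "dp_minimal TYPE('a)" and mx: "maximal_ideal M" and nu: "\<not> x dvd 1"
  shows "x \<in> M"
proof (rule ccontr)
  assume xM: "x \<notin> M"
  have iM: "is_ideal M" and MU: "M \<noteq> UNIV" using mx by (auto simp: maximal_ideal_def)
  define J where "J = {m + x * r | m r. m \<in> M}"
  have iJ: "is_ideal J" unfolding is_ideal_def J_def
  proof (intro conjI ballI allI)
    show "0 \<in> {m + x * r | m r. m \<in> M}" using iM
      by (auto simp: is_ideal_def intro!: exI[of _ 0])
  next
    fix a b assume "a \<in> {m + x * r | m r. m \<in> M}" "b \<in> {m + x * r | m r. m \<in> M}"
    then obtain m1 r1 m2 r2 where "a = m1 + x * r1" "m1 \<in> M" "b = m2 + x * r2" "m2 \<in> M" by blast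
    hence "a + b = (m1 + m2) + x * (r1 + r2)" "m1 + m2 \<in> M" using iM
      by (auto simp: algebra_simps intro: ideal_add)
    thus "a + b \<in> {m + x * r | m r. m \<in> M}" by blast
  next
    fix s a assume "a \<in> {m + x * r | m r. m \<in> M}"
    then obtain m1 r1 where "a = m1 + x * r1" "m1 \<in> M" by blast
    hence "s * a = (s * m1) + x * (s * r1)" by (simp add: algebra_simps)
    moreover have "s * m1 \<in> M" using iM \<open>m1 \<in> M\<close> by (rule ideal_mult)
    ultimately show "s * a \<in> {m + x * r | m r. m \<in> M}" by blast
  qed
  have "M \<subseteq> J" unfolding J_def by force
  moreover have "x \<in> J"
  proof -
    have "0 \<in> M" "x = 0 + x * 1" using iM by (auto simp: is_ideal_def)
    thus ?thesis unfolding J_def by blast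
  qed
  moreover have "\<forall>J. is_ideal J \<and> M \<subseteq> J \<longrightarrow> J = M \<or> J = UNIV"
    using mx by (simp add: maximal_ideal_def)
  ultimately have "J = M \<or> J = UNIV" using iJ by simp
  hence "J = UNIV" using \<open>x \<in> J\<close> xM by auto
  hence "1 \<in> J" by simp
  then obtain m r where mr: "1 = m + x * r" "m \<in> M" unfolding J_def by blast
  define v where "v = x * r"
  have mv: "m = 1 - v" using mr v_def by (simp add: algebra_simps)
  have vm: "v = 1 - m" using mr v_def by (simp add: algebra_simps)
  have m_nu: "\<not> m dvd 1" using ideal_unit[OF iM mr(2)] MU by blast
  have v_nu: "\<not> v dvd 1"
  proof
    assume "v dvd 1"
    hence "x dvd 1" unfolding v_def by (rule dvd_mult_left)
    thus False using nu by blast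
  qed
  have m0: "m \<noteq> 0"
  proof
    assume "m = 0"
    hence "v = 1" using mv by simp
    thus False using v_nu by simp
  qed
  have v0: "v \<noteq> 0"
  proof
    assume "v = 0"
    hence "m = 1" using mv by simp
    thus False using m_nu by simp
  qed
  obtain N :: nat where gN: "\<And>(g::'a) h (bs::nat \<Rightarrow> 'a) (cs::nat \<Rightarrow> 'a). (\<forall>i. h dvd bs i) \<Longrightarrow> (\<forall>j. g dvd cs j) \<Longrightarrow>
     (\<forall>i<N. \<forall>i'<N. i \<noteq> i' \<longrightarrow> \<not> g dvd (bs i - bs i')) \<Longrightarrow>
     (\<forall>j<N. \<forall>j'<N. j \<noteq> j' \<longrightarrow> \<not> h dvd (cs j - cs j')) \<Longrightarrow> False"
    apply (rule grid[OF dp]) by (rule, assumption)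
  show False
  proof (rule gN[of "v ^ N" "\<lambda>i. v ^ N * m ^ i" "m ^ N" "\<lambda>j. m ^ N * v ^ j"])
    show "\<forall>i<N. \<forall>i'<N. i \<noteq> i' \<longrightarrow> \<not> m ^ N dvd (v ^ N * m ^ i - v ^ N * m ^ i')"
    proof (intro allI impI notI)
      fix i i' assume "i < N" "i' < N" "i \<noteq> i'" "m ^ N dvd (v ^ N * m ^ i - v ^ N * m ^ i')"
      hence "m ^ N dvd v ^ N * (m ^ i - m ^ i')" by (simp add: right_diff_distrib)
      hence "m dvd v ^ N" using pow_trick[OF m0, of i N i' "v ^ N"] \<open>i < N\<close> \<open>i' < N\<close> \<open>i \<noteq> i'\<close> by blast
      hence "m dvd (1 - m) ^ N" using vm by simp
      hence "m dvd 1" by (rule dvd_one_minus_pow)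
      thus False using m_nu by blast
    qed
    show "\<forall>j<N. \<forall>j'<N. j \<noteq> j' \<longrightarrow> \<not> v ^ N dvd (m ^ N * v ^ j - m ^ N * v ^ j')"
    proof (intro allI impI notI)
      fix i i' assume "i < N" "i' < N" "i \<noteq> i'" "v ^ N dvd (m ^ N * v ^ i - m ^ N * v ^ i')"
      hence "v ^ N dvd m ^ N * (v ^ i - v ^ i')" by (simp add: right_diff_distrib)
      hence "v dvd m ^ N" using pow_trick[OF v0, of i N i' "m ^ N"] \<open>i < N\<close> \<open>i' < N\<close> \<open>i \<noteq> i'\<close> by blast
      hence "v dvd (1 - v) ^ N" using mv by simp
      hence "v dvd 1" by (rule dvd_one_minus_pow)
      thus False using v_nu by blast
    qed
  qed auto
qed


lemma P_sub_M:
  fixes M P :: "'a::idom set"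
  assumes dp: "dp_minimal TYPE('a)" and mx: "maximal_ideal M" and pr: "prime_ideal P"
  shows "P \<subseteq> M"
proof
  fix x assume xP: "x \<in> P"
  have "\<not> x dvd 1"
  proof
    assume "x dvd 1"
    hence "P = UNIV" using ideal_unit[OF _ xP] pr by (simp add: prime_ideal_def)
    thus False using pr by (simp add: prime_ideal_def)
  qed
  thus "x \<in> M" by (rule locality[OF dp mx])
qed

lemma dist:
  fixes M P :: "'a::idom set"
  assumes mx: "maximal_ideal M" and pr: "prime_ideal P" and PM: "P \<subseteq> M"
    and uM: "u \<in> M" and uP: "u \<notin> P" and ij: "i \<noteq> j"
  shows "u ^ i - u ^ j \<notin> P"
proof -
  have iM: "is_ideal M" and MU: "M \<noteq> UNIV" using mx by (auto simp: maximal_ideal_def)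
  have iP: "is_ideal P" and pp: "\<And>x y. x * y \<in> P \<Longrightarrow> x \<in> P \<or> y \<in> P"
    using pr by (auto simp: prime_ideal_def)
  have key: "u ^ i - u ^ j \<notin> P" if "i < j" for i j
  proof
    assume h: "u ^ i - u ^ j \<in> P"
    obtain d where d: "j = i + d" "d > 0" using \<open>i < j\<close> by (metis less_imp_add_positive)
    have "u ^ i - u ^ j = u ^ i * (1 - u ^ d)" by (simp add: d power_add algebra_simps)
    hence "u ^ i * (1 - u ^ d) \<in> P" using h by simp
    hence "u ^ i \<in> P \<or> 1 - u ^ d \<in> P" by (rule pp)
    moreover have "u ^ i \<notin> P" using prime_pow[OF pr uP] .
    ultimately have "1 - u ^ d \<in> M" using PM by blast
    moreover have "u ^ d \<in> M"
    proof -
      obtain e where "d = Suc e" using d(2) gr0_conv_Suc by blast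
      hence "u ^ d = u ^ e * u" by (simp add: mult.commute)
      thus ?thesis using ideal_mult[OF iM uM] by simp
    qed
    ultimately have "(1 - u ^ d) + u ^ d \<in> M" using ideal_add[OF iM] by blast
    hence "1 \<in> M" by simp
    hence "M = UNIV" using ideal_unit[OF iM] by simp
    thus False using MU by blast
  qed
  show ?thesis
  proof (cases "i < j")
    case True thus ?thesis using key by blast
  next
    case False
    hence "j < i" using ij by simp
    hence nj: "u ^ j - u ^ i \<notin> P" using key by blast
    show ?thesis
    proof
      assume "u ^ i - u ^ j \<in> P"
      hence "(-1) * (u ^ i - u ^ j) \<in> P" by (rule ideal_mult[OF iP])
      thus False using nj by simp
    qed
  qed
qed

lemma exists_u:
  fixes M P :: "'a::idom set"
  assumes dp: "dp_minimal TYPE('a)" and mx: "maximal_ideal M" and pr: "prime_ideal P" and ne: "P \<noteq> M"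
  obtains u where "u \<in> M" "u \<notin> P"
  using P_sub_M[OF dp mx pr] ne by blast

lemma divides:
  fixes M P :: "'a::idom set"
  assumes dp: "dp_minimal TYPE('a)" and mx: "maximal_ideal M" and pr: "prime_ideal P" and ne: "P \<noteq> M"
    and tP: "t \<notin> P" and qP: "q \<in> P"
  shows "t dvd q"
proof (rule ccontr)
  assume ntq: "\<not> t dvd q"
  have iP: "is_ideal P" and pp: "\<And>x y. x * y \<in> P \<Longrightarrow> x \<in> P \<or> y \<in> P"
    using pr by (auto simp: prime_ideal_def)
  have PM: "P \<subseteq> M" by (rule P_sub_M[OF dp mx pr])
  obtain u where uM: "u \<in> M" and uP: "u \<notin> P" using exists_u[OF dp mx pr ne] by blast
  have t0: "t \<noteq> 0" using tP iP by (auto simp: is_ideal_def)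
  obtain N :: nat where gN: "\<And>(g::'a) h (bs::nat \<Rightarrow> 'a) (cs::nat \<Rightarrow> 'a). (\<forall>i. h dvd bs i) \<Longrightarrow> (\<forall>j. g dvd cs j) \<Longrightarrow>
     (\<forall>i<N. \<forall>i'<N. i \<noteq> i' \<longrightarrow> \<not> g dvd (bs i - bs i')) \<Longrightarrow>
     (\<forall>j<N. \<forall>j'<N. j \<noteq> j' \<longrightarrow> \<not> h dvd (cs j - cs j')) \<Longrightarrow> False"
    apply (rule grid[OF dp]) by (rule, assumption)
  show False
  proof (rule gN[of q "\<lambda>i. q * t ^ i" "t ^ N" "\<lambda>j. t ^ N * u ^ j"])
    show "\<forall>i<N. \<forall>i'<N. i \<noteq> i' \<longrightarrow> \<not> t ^ N dvd (q * t ^ i - q * t ^ i')"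
    proof (intro allI impI notI)
      fix i i' assume "i < N" "i' < N" "i \<noteq> i'" "t ^ N dvd (q * t ^ i - q * t ^ i')"
      hence "t ^ N dvd q * (t ^ i - t ^ i')" by (simp add: right_diff_distrib)
      hence "t dvd q" using pow_trick[OF t0, of i N i' q] \<open>i < N\<close> \<open>i' < N\<close> \<open>i \<noteq> i'\<close> by blast
      thus False using ntq by blast
    qed
    show "\<forall>j<N. \<forall>j'<N. j \<noteq> j' \<longrightarrow> \<not> q dvd (t ^ N * u ^ j - t ^ N * u ^ j')"
    proof (intro allI impI notI)
      fix i i' assume "i < N" "i' < N" "i \<noteq> i'" "q dvd (t ^ N * u ^ i - t ^ N * u ^ i')"
      hence "q dvd t ^ N * (u ^ i - u ^ i')" by (simp add: right_diff_distrib)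
      hence "t ^ N * (u ^ i - u ^ i') \<in> P" by (rule ideal_dvd[OF iP qP])
      hence "t ^ N \<in> P \<or> u ^ i - u ^ i' \<in> P" by (rule pp)
      moreover have "t ^ N \<notin> P" by (rule prime_pow[OF pr tP])
      moreover have "u ^ i - u ^ i' \<notin> P" by (rule dist[OF mx pr PM uM uP \<open>i \<noteq> i'\<close>])
      ultimately show False by blast
    qed
  qed auto
qed

lemma valu:
  fixes M P :: "'a::idom set"
  assumes dp: "dp_minimal TYPE('a)" and mx: "maximal_ideal M" and pr: "prime_ideal P" and ne: "P \<noteq> M"
  shows "\<exists>r. r \<notin> P \<and> (a dvd s * r \<or> s dvd a * r)"
proof (rule ccontr)
  assume nr: "\<not> (\<exists>r. r \<notin> P \<and> (a dvd s * r \<or> s dvd a * r))"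
  have PM: "P \<subseteq> M" by (rule P_sub_M[OF dp mx pr])
  obtain u where uM: "u \<in> M" and uP: "u \<notin> P" using exists_u[OF dp mx pr ne] by blast
  obtain N :: nat where gN: "\<And>(g::'a) h (bs::nat \<Rightarrow> 'a) (cs::nat \<Rightarrow> 'a). (\<forall>i. h dvd bs i) \<Longrightarrow> (\<forall>j. g dvd cs j) \<Longrightarrow>
     (\<forall>i<N. \<forall>i'<N. i \<noteq> i' \<longrightarrow> \<not> g dvd (bs i - bs i')) \<Longrightarrow>
     (\<forall>j<N. \<forall>j'<N. j \<noteq> j' \<longrightarrow> \<not> h dvd (cs j - cs j')) \<Longrightarrow> False"
    apply (rule grid[OF dp]) by (rule, assumption)
  show False
  proof (rule gN[of s "\<lambda>i. s * u ^ i" a "\<lambda>j. a * u ^ j"])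
    show "\<forall>i<N. \<forall>i'<N. i \<noteq> i' \<longrightarrow> \<not> a dvd (s * u ^ i - s * u ^ i')"
    proof (intro allI impI notI)
      fix i i' assume "i < N" "i' < N" "i \<noteq> i'" "a dvd (s * u ^ i - s * u ^ i')"
      hence "a dvd s * (u ^ i - u ^ i')" by (simp add: right_diff_distrib)
      moreover have "u ^ i - u ^ i' \<notin> P" by (rule dist[OF mx pr PM uM uP \<open>i \<noteq> i'\<close>])
      ultimately show False using nr by blast
    qed
    show "\<forall>j<N. \<forall>j'<N. j \<noteq> j' \<longrightarrow> \<not> s dvd (a * u ^ j - a * u ^ j')"
    proof (intro allI impI notI)
      fix i i' assume "i < N" "i' < N" "i \<noteq> i'" "s dvd (a * u ^ i - a * u ^ i')"
      hence "s dvd a * (u ^ i - u ^ i')" by (simp add: right_diff_distrib)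
      moreover have "u ^ i - u ^ i' \<notin> P" by (rule dist[OF mx pr PM uM uP \<open>i \<noteq> i'\<close>])
      ultimately show False using nr by blast
    qed
  qed auto
qed


lemma H:
  fixes M P :: "'a::idom set"
  assumes dp: "dp_minimal TYPE('a)" and mx: "maximal_ideal M" and pr: "prime_ideal P" and ne: "P \<noteq> M"
    and ns: "\<not> s dvd a" and pP: "p \<in> P"
  shows "\<exists>q\<in>P. s * p = a * q"
proof -
  have iP: "is_ideal P" and pp: "\<And>x y. x * y \<in> P \<Longrightarrow> x \<in> P \<or> y \<in> P"
    using pr by (auto simp: prime_ideal_def)
  have z: "0 \<in> P" using iP by (simp add: is_ideal_def)
  obtain r where rP: "r \<notin> P" and rd: "a dvd s * r \<or> s dvd a * r" using valu[OF dp mx pr ne] by blast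
  have r0: "r \<noteq> 0" using rP z by blast
  show ?thesis
  proof (cases "a dvd s * r")
    case True
    then obtain w where sr: "s * r = a * w" by (auto simp: dvd_def)
    have "w * p \<in> P" by (rule ideal_mult[OF iP pP])
    hence "r dvd w * p" by (rule divides[OF dp mx pr ne rP])
    then obtain q where wp: "w * p = r * q" by (auto simp: dvd_def)
    have "r * q \<in> P" using \<open>w * p \<in> P\<close> wp by simp
    hence qP: "q \<in> P" using pp rP by blast
    have "r * (s * p) = r * (a * q)"
    proof -
      have "r * (s * p) = (s * r) * p" by (simp add: algebra_simps)
      also have "\<dots> = a * (w * p)" using sr by (simp add: algebra_simps)
      also have "\<dots> = r * (a * q)" using wp by (simp add: algebra_simps)
      finally show ?thesis .
    qed
    hence "s * p = a * q" using r0 by simp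
    thus ?thesis using qP by blast
  next
    case False
    hence "s dvd a * r" using rd by blast
    then obtain w where ar: "a * r = s * w" by (auto simp: dvd_def)
    show ?thesis
    proof (cases "w \<in> P")
      case True
      hence "r dvd w" by (rule divides[OF dp mx pr ne rP])
      then obtain w' where ww: "w = r * w'" by (auto simp: dvd_def)
      have "r * a = r * (s * w')" using ar ww by (simp add: algebra_simps)
      hence "a = s * w'" using r0 by simp
      hence "s dvd a" by simp
      thus ?thesis using ns by blast
    next
      case False
      have w0: "w \<noteq> 0" using False z by blast
      have "r * p \<in> P" by (rule ideal_mult[OF iP pP])
      hence "w dvd r * p" by (rule divides[OF dp mx pr ne False])
      then obtain q where rp: "r * p = w * q" by (auto simp: dvd_def)
      have "w * q \<in> P" using \<open>r * p \<in> P\<close> rp by simp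
      hence qP: "q \<in> P" using pp False by blast
      have "w * (a * q) = w * (s * p)"
      proof -
        have "w * (a * q) = a * (w * q)" by (simp add: algebra_simps)
        also have "\<dots> = (a * r) * p" using rp by (simp add: algebra_simps)
        also have "\<dots> = w * (s * p)" using ar by (simp add: algebra_simps)
        finally show ?thesis .
      qed
      hence "s * p = a * q" using w0 by simp
      thus ?thesis using qP by blast
    qed
  qed
qed

theorem mainTheorem14:
  fixes M P :: "'a::idom set"
  assumes "dp_minimal TYPE('a)"
    and "maximal_ideal M"
    and "prime_ideal P"
    and "P \<noteq> M"
  shows "strongly_prime P"
  unfolding strongly_prime_def
proof (intro allI impI)
  note dp = assms(1) and mx = assms(2) and pr = assms(3) and ne = assms(4)
  have pp: "\<And>x y. x * y \<in> P \<Longrightarrow> x \<in> P \<or> y \<in> P"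
    using pr by (auto simp: prime_ideal_def)
  fix x y :: "'a fract"
  assume "x * y \<in> to_fract ` P"
  then obtain p where pP: "p \<in> P" and xyp: "x * y = to_fract p" by blast
  obtain a s where x: "x = Fract a s" and s0: "s \<noteq> 0" by (cases x) blast
  obtain b t where y: "y = Fract b t" and t0: "t \<noteq> 0" by (cases y) blast
  have "Fract (a * b) (s * t) = Fract p 1" using xyp x y by (simp add: to_fract_def)
  hence ab: "a * b = p * (s * t)" using s0 t0 by (simp add: eq_fract)
  show "x \<in> to_fract ` P \<or> y \<in> to_fract ` P"
  proof (cases "s dvd a")
    case sa: True
    show ?thesis
    proof (cases "t dvd b")
      case tb: True
      obtain a' where a': "a = s * a'" using sa by (auto simp: dvd_def)
      obtain b' where b': "b = t * b'" using tb by (auto simp: dvd_def)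
      have xa: "x = to_fract a'" using x a' s0 by (simp add: to_fract_def eq_fract)
      have yb: "y = to_fract b'" using y b' t0 by (simp add: to_fract_def eq_fract)
      have "(s * t) * (a' * b') = (s * t) * p" using ab a' b' by (simp add: algebra_simps)
      hence "a' * b' = p" using s0 t0 by simp
      hence "a' \<in> P \<or> b' \<in> P" using pP pp by blast
      thus ?thesis using xa yb by blast
    next
      case tb: False
      obtain q where qP: "q \<in> P" and tq: "t * p = b * q" using H[OF dp mx pr ne tb pP] by blast
      have b0: "b \<noteq> 0" using tb by auto
      have "b * (q * s) = b * a"
      proof -
        have "b * (q * s) = (t * p) * s" using tq by (simp add: algebra_simps)
        also have "\<dots> = b * a" using ab by (simp add: algebra_simps)
        finally show ?thesis .
      qed
      hence "q * s = a" using b0 by simp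
      hence "x = to_fract q" using x s0 by (simp add: to_fract_def eq_fract)
      thus ?thesis using qP by blast
    qed
  next
    case sa: False
    obtain q where qP: "q \<in> P" and sq: "s * p = a * q" using H[OF dp mx pr ne sa pP] by blast
    have a0: "a \<noteq> 0" using sa by auto
    have "a * (q * t) = a * b"
    proof -
      have "a * (q * t) = (s * p) * t" using sq by (simp add: algebra_simps)
      also have "\<dots> = a * b" using ab by (simp add: algebra_simps)
      finally show ?thesis .
    qed
    hence "q * t = b" using a0 by simp
    hence "y = to_fract q" using y t0 by (simp add: to_fract_def eq_fract)
    thus ?thesis using qP by blast
  qed
qed

end
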